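(* Let $y>0$ and $\mu_0\in(-1,0)$. If $x>0$ and $$x\ge L_{\mu_0}(y)=\frac{\sqrt{(y-\mu_0-2)^2+4y}-y-\mu_0}{2y},$$ then $Q_\mu(x,y)>0$ for all $\mu\ge\mu_0$.
   Context: For real $\mu$, $x>0$, $y\ge 0$: $Q_{\mu}(x,y)=x^{\frac12(1-\mu)}\int_y^{\infty} t^{\frac12(\mu-1)}e^{-t-x}I_{\mu-1}(2\sqrt{xt})\,dt$, where $I_\nu$ is the modified Bessel function of the first kind. *)

theory Defs
  imports "HOL-Analysis.Analysis"
begin

text \<open>The reciprocal Gamma function rGamma is used so that terms with k+nu+1 a non-positive
  integer vanish (the standard convention, needed e.g. for integer negative order).\<close>
definition besselI :: "real \<Rightarrow> real \<Rightarrow> real" where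
  "besselI nu z = (\<Sum>k. (z / 2) powr (2 * real k + nu) * rGamma (real k + nu + 1) / fact k)"

definition marcumQ :: "real \<Rightarrow> real \<Rightarrow> real \<Rightarrow> real" where
  "marcumQ mu x y = x powr ((1 - mu) / 2) *
     (LINT t:{y..}|lborel. t powr ((mu - 1) / 2) * exp (- t - x) * besselI (mu - 1) (2 * sqrt (x * t)))"

definition L_bound :: "real \<Rightarrow> real \<Rightarrow> real" where
  "L_bound mu0 y = (sqrt ((y - mu0 - 2)^2 + 4 * y) - y - mu0) / (2 * y)"

end

theory Submission
  imports Defs
begin


lemma exp_sums_real: "(\<lambda>n. (x::real)^n / fact n) sums exp x"
  using exp_converges[of x] by (simp add: divide_inverse mult.commute)

lemma pow_fact_le_exp: "0 \<le> (x::real) \<Longrightarrow> x^n / fact n \<le> exp x"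
proof -
  assume x: "0 \<le> x"
  have "(\<Sum>k\<in>{n}. x^k / fact k) \<le> (\<Sum>k. x^k / fact k)"
    by (rule sum_le_suminf) (use exp_sums_real[of x] x in \<open>auto simp: sums_iff\<close>)
  thus ?thesis using exp_sums_real[of x] by (simp add: sums_iff)
qed

definition gt :: "real \<Rightarrow> real \<Rightarrow> nat \<Rightarrow> real" where
  "gt mu w k = w^k * rGamma (real k + mu) / fact k"

definition Mc :: "real \<Rightarrow> real" where
  "Mc mu = \<bar>rGamma mu\<bar> + \<bar>rGamma (mu+1)\<bar> + \<bar>rGamma (mu+2)\<bar> + 1"

lemma rGamma_big:
  assumes "mu > -1" "k \<ge> 3"
  shows "0 < rGamma (real k + mu) \<and> rGamma (real k + mu) \<le> 1 / fact (k - 2)"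
proof -
  have "Gamma (real (k-2) + 1) < Gamma (real k + mu)"
    using assms by (intro Gamma_real_strict_mono) auto
  moreover have "Gamma (real (k-2) + 1) = fact (k-2)"
    using Gamma_fact[of "k-2", where 'a=real] by (simp add: add.commute)
  moreover have "Gamma (real k + mu) > 0" using assms by auto
  ultimately show ?thesis
    by (simp add: rGamma_inverse_Gamma inverse_eq_divide divide_left_mono frac_le)
qed

lemma gt_bound:
  assumes mu: "mu > -1" and w: "w \<ge> 0"
  shows "\<bar>gt mu w k\<bar> \<le> ((2 * Mc mu + 1) * (1+w)^2 * exp (sqrt w)) * ((1 + sqrt w)^k / fact k)"
proof -
  define s where "s = sqrt w"
  have s: "s \<ge> 0" "w = s^2" using w by (auto simp: s_def)
  define E where "E = (2 * Mc mu + 1) * (1+w)^2 * exp s"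
  have M1: "Mc mu \<ge> 1" by (simp add: Mc_def)
  have E1: "E \<ge> (1+w)^2 * exp s" unfolding E_def using M1 w by (simp add: mult_right_mono)
  have E2: "E \<ge> Mc mu * (1+w)^2"
  proof -
    have "Mc mu * (1+w)^2 \<le> (2 * Mc mu + 1) * (1+w)^2" using M1 by (intro mult_right_mono) auto
    also have "\<dots> \<le> (2 * Mc mu + 1) * (1+w)^2 * exp s"
    proof -
      have "0 \<le> (2 * Mc mu + 1) * (1+w)^2" using M1 by simp
      thus ?thesis using s by (subst mult_le_cancel_left1) auto
    qed
    finally show ?thesis by (simp add: E_def)
  qed
  have sk: "s^k \<le> (1+s)^k" using s by (intro power_mono) auto
  show ?thesis
  proof (cases "k < 3")
    case True
    have r: "\<bar>rGamma (real k + mu)\<bar> \<le> Mc mu"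
      using True by (auto simp: Mc_def less_Suc_eq numeral_3_eq_3 add.commute)
    have wk: "w^k \<le> (1+w)^2"
    proof -
      have "w^k \<le> (1+w)^k" using w by (intro power_mono) auto
      also have "\<dots> \<le> (1+w)^2" using True w by (intro power_increasing) auto
      finally show ?thesis .
    qed
    have "\<bar>gt mu w k\<bar> = w^k * \<bar>rGamma (real k + mu)\<bar> / fact k"
      using w by (simp add: gt_def abs_mult)
    also have "\<dots> \<le> (1+w)^2 * Mc mu / fact k"
      by (intro divide_right_mono mult_mono wk r) auto
    also have "\<dots> \<le> E * ((1+s)^k / fact k)"
    proof -
      have E0: "E \<ge> 0" using E2 M1 by (smt (verit) mult_nonneg_nonneg zero_le_power2)
      have "(1+w)^2 * Mc mu \<le> E" using E2 by (simp add: mult.commute)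
      also have "E \<le> E * (1+s)^k" using E0 s by (subst mult_le_cancel_left1) (auto intro: one_le_power)
      finally have "(1+w)^2 * Mc mu \<le> E * (1+s)^k" .
      thus ?thesis by (simp add: divide_right_mono)
    qed
    finally show ?thesis by (simp add: E_def s_def)
  next
    case False
    then have k3: "k \<ge> 3" by simp
    from rGamma_big[OF mu k3] have r: "0 < rGamma (real k + mu)" "rGamma (real k + mu) \<le> 1 / fact (k-2)" by auto
    have wk: "w^k = s^2 * s^k * s^(k-2)"
    proof -
      define j where "j = k - 2"
      have j: "k = j + 2" using k3 by (simp add: j_def)
      have "w^k = s^(2*k)" using s by (simp add: power_mult)
      also have "2*k = 2 + k + (k-2)" using j by simp
      finally show ?thesis by (simp only: power_add)
    qed
    have "\<bar>gt mu w k\<bar> = w^k * rGamma (real k + mu) / fact k"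
      using w r by (simp add: gt_def abs_mult)
    also have "\<dots> \<le> w^k * (1 / fact (k-2)) / fact k"
      using w by (intro divide_right_mono mult_left_mono r) auto
    also have "\<dots> = s^2 * (s^(k-2) / fact (k-2)) * (s^k / fact k)"
    proof -
      have id: "\<And>a b c d e::real. a*b*c*(1/d)/e = a*(c/d)*(b/e)" by simp
      show ?thesis unfolding wk by (rule id)
    qed
    also have "\<dots> \<le> (1+w)^2 * exp s * ((1+s)^k / fact k)"
    proof -
      have A0: "w \<le> (1+w)^2"
      proof -
        have "(1+w)^2 = 1 + 2*w + w^2" by (simp add: power2_sum)
        moreover have "w^2 \<ge> 0" by simp
        ultimately show ?thesis using w by linarith
      qed
      have A: "s^2 \<le> (1+w)^2" using A0 s(2) by simp
      have B: "s^(k-2) / fact (k-2) \<le> exp s" by (rule pow_fact_le_exp[OF s(1)])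
      have C: "s^k / fact k \<le> (1+s)^k / fact k" using sk by (simp add: divide_right_mono)
      have n1: "0 \<le> s^(k-2) / fact (k-2)" "0 \<le> s^k / fact k" "0 \<le> (1+w)^2" using s(1) by simp_all
      have "s^2 * (s^(k-2) / fact (k-2)) \<le> (1+w)^2 * exp s"
        by (rule mult_mono[OF A B n1(3) n1(1)])
      moreover have "0 \<le> (1+w)^2 * exp s" by simp
      ultimately show ?thesis by (rule mult_mono[OF _ C _ n1(2)])
    qed
    also have "\<dots> \<le> E * ((1+s)^k / fact k)" using E1 s(1) by (intro mult_right_mono) auto
    finally show ?thesis by (simp add: E_def s_def)
  qed
qed



lemma gt_summable:
  assumes "mu > -1" "w \<ge> 0"
  shows "summable (gt mu w)"
proof (rule summable_comparison_test)
  show "\<exists>N. \<forall>n\<ge>N. norm (gt mu w n) \<le> ((2 * Mc mu + 1) * (1+w)^2 * exp (sqrt w)) * ((1 + sqrt w)^n / fact n)"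
    using gt_bound[OF assms] by auto
  show "summable (\<lambda>n. ((2 * Mc mu + 1) * (1+w)^2 * exp (sqrt w)) * ((1 + sqrt w)^n / fact n))"
    by (rule summable_mult) (use exp_sums_real in \<open>auto simp: sums_iff\<close>)
qed

lemma gt_suminf_bound:
  assumes "mu > -1" "w \<ge> 0"
  shows "\<bar>suminf (gt mu w)\<bar> \<le> ((2 * Mc mu + 1) * (1+w)^2 * exp (sqrt w)) * exp (1 + sqrt w)"
proof -
  define E where "E = (2 * Mc mu + 1) * (1+w)^2 * exp (sqrt w)"
  have sb: "summable (\<lambda>n. E * ((1 + sqrt w)^n / fact n))"
    by (rule summable_mult) (use exp_sums_real in \<open>auto simp: sums_iff\<close>)
  have sa: "summable (\<lambda>n. \<bar>gt mu w n\<bar>)"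
    by (rule summable_comparison_test[OF _ sb]) (use gt_bound[OF assms] in \<open>auto simp: E_def\<close>)
  have "\<bar>suminf (gt mu w)\<bar> \<le> (\<Sum>n. \<bar>gt mu w n\<bar>)"
    using summable_norm[of "gt mu w"] sa by simp
  also have "\<dots> \<le> (\<Sum>n. E * ((1 + sqrt w)^n / fact n))"
    by (rule suminf_le[OF _ sa sb]) (use gt_bound[OF assms] in \<open>auto simp: E_def\<close>)
  also have "\<dots> = E * exp (1 + sqrt w)"
    using exp_sums_real[of "1 + sqrt w"] suminf_mult[of "\<lambda>n. (1 + sqrt w) ^ n / fact n" E]
    by (simp add: sums_iff)
  finally show ?thesis by (simp add: E_def)
qed

lemma gt_suminf_pos:
  assumes mu: "mu > -1" and w: "w > 0" and wm: "w + mu > 0"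
  shows "suminf (gt mu w) > 0"
proof -
  have s: "summable (gt mu w)" using gt_summable mu w by auto
  have s1: "summable (\<lambda>n. gt mu w (Suc n))" using s by (simp add: summable_Suc_iff)
  have e1: "suminf (gt mu w) = gt mu w 0 + (\<Sum>n. gt mu w (Suc n))"
    using suminf_split_head[OF s] by simp
  have e2: "(\<Sum>n. gt mu w (Suc n)) = gt mu w 1 + (\<Sum>n. gt mu w (Suc (Suc n)))"
    using suminf_split_head[OF s1] by simp
  have s2: "summable (\<lambda>n. gt mu w (Suc (Suc n)))" using s1 summable_Suc_iff[of "\<lambda>n. gt mu w (Suc n)"] by simp
  have nn: "0 \<le> (\<Sum>n. gt mu w (Suc (Suc n)))"
  proof (rule suminf_nonneg[OF s2])
    fix n
    have "real (Suc (Suc n)) + mu > 0" using mu by simp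
    hence "rGamma (real (Suc (Suc n)) + mu) > 0" by (simp add: rGamma_inverse_Gamma)
    thus "0 \<le> gt mu w (Suc (Suc n))" using w by (simp add: gt_def)
  qed
  have "gt mu w 0 + gt mu w 1 = rGamma mu + w * rGamma (1 + mu)"
    by (simp add: gt_def)
  also have "rGamma mu = mu * rGamma (1 + mu)"
    using rGamma_plus1[of mu] by (simp add: add.commute)
  also have "mu * rGamma (1 + mu) + w * rGamma (1 + mu) = (w + mu) * rGamma (1 + mu)"
    by (simp add: algebra_simps)
  finally have h: "gt mu w 0 + gt mu w 1 = (w + mu) * rGamma (1 + mu)" .
  have "rGamma (1 + mu) > 0" using mu by (simp add: rGamma_inverse_Gamma)
  hence "gt mu w 0 + gt mu w 1 > 0" using h wm by simp
  thus ?thesis using e1 e2 nn by linarith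
qed

lemma bessel_eq:
  assumes w: "w > 0" and mu: "mu > -1"
  shows "besselI (mu - 1) (2 * sqrt w) = sqrt w powr (mu - 1) * suminf (gt mu w)"
proof -
  have "\<And>k. (2 * sqrt w / 2) powr (2 * real k + (mu - 1)) * rGamma (real k + (mu - 1) + 1) / fact k
        = sqrt w powr (mu - 1) * gt mu w k"
  proof -
    fix k
    have sw: "sqrt w > 0" using w by simp
    have "sqrt w powr (2 * real k + (mu - 1)) = sqrt w powr (real (2*k)) * sqrt w powr (mu - 1)"
      by (simp add: powr_add)
    also have "sqrt w powr (real (2*k)) = sqrt w ^ (2*k)"
      by (rule powr_realpow[OF sw])
    also have "\<dots> = w^k" using w by (simp add: power_mult)
    finally show "(2 * sqrt w / 2) powr (2 * real k + (mu - 1)) * rGamma (real k + (mu - 1) + 1) / fact k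
        = sqrt w powr (mu - 1) * gt mu w k" by (simp add: gt_def)
  qed
  hence "besselI (mu - 1) (2 * sqrt w) = (\<Sum>k. sqrt w powr (mu - 1) * gt mu w k)"
    unfolding besselI_def by simp
  also have "\<dots> = sqrt w powr (mu - 1) * suminf (gt mu w)"
    by (rule suminf_mult) (rule gt_summable; use w mu in \<open>simp\<close>)
  finally show ?thesis .
qed
lemma powr_le_exp:
  fixes p y :: real
  assumes y: "y > 0"
  shows "\<exists>C. \<forall>t\<ge>y. t powr p \<le> C * exp (t/4)"
proof (cases "p \<le> 0")
  case True
  show ?thesis
  proof (intro exI allI impI)
    fix t assume t: "y \<le> t"
    have "t powr p \<le> y powr p" using t y True by (intro powr_mono2') auto
    also have "\<dots> \<le> y powr p * exp (t/4)" using y t by simp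
    finally show "t powr p \<le> y powr p * exp (t/4)" .
  qed
next
  case False
  hence p: "p > 0" by simp
  show ?thesis
  proof (intro exI allI impI)
    fix t assume t: "y \<le> t"
    hence t0: "t > 0" using y by simp
    have "ln (t / (4*p)) \<le> t / (4*p) - 1" using t0 p by (intro ln_le_minus_one) auto
    hence "ln t - ln (4*p) \<le> t/(4*p) - 1" using t0 p by (simp add: ln_div)
    hence "p * ln t \<le> p * (t/(4*p) - 1 + ln (4*p))" using p by (intro mult_left_mono) auto
    also have "\<dots> = t/4 + p * (ln (4*p) - 1)" using p by (simp add: field_simps)
    finally have le: "p * ln t \<le> t/4 + p * (ln (4*p) - 1)" .
    have "t powr p = exp (p * ln t)" using t0 by (simp add: powr_def)
    also have "\<dots> \<le> exp (t/4 + p * (ln (4*p) - 1))" using le by simp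
    also have "\<dots> = exp (p * (ln (4*p) - 1)) * exp (t/4)" by (simp add: exp_add)
    finally show "t powr p \<le> exp (p * (ln (4*p) - 1)) * exp (t/4)" .
  qed
qed

lemma exp_ineq:
  fixes x t :: real
  assumes "x \<ge> 0" "t \<ge> 0"
  shows "exp (- t - x) * exp (sqrt (x*t)) * exp (1 + sqrt (x*t)) \<le> exp (1 + x) * exp (- t / 2)"
proof -
  define a where "a = sqrt x"
  define b where "b = sqrt t"
  have ab: "a^2 = x" "b^2 = t" "sqrt (x*t) = a*b" using assms by (auto simp: a_def b_def real_sqrt_mult)
  have "(2*a - b)^2 \<ge> 0" by simp
  hence "2*(a*b) \<le> 2*a^2 + b^2/2"
    by (simp add: power2_eq_square algebra_simps)
  hence "2 * sqrt (x*t) \<le> 2*x + t/2" using ab by simp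
  hence "- t - x + sqrt (x*t) + (1 + sqrt (x*t)) \<le> 1 + x + - t / 2" by simp
  thus ?thesis by (simp add: exp_add[symmetric])
qed

lemma Q_pos:
  fixes x y mu :: real
  assumes x: "x > 0" and y: "y > 0" and mu: "mu > -1" and xy: "x*y + mu > 0"
  shows "marcumQ mu x y > 0"
proof -
  define F where "F t = t powr ((mu - 1) / 2) * exp (- t - x) * besselI (mu - 1) (2 * sqrt (x * t))" for t
  define S where "S t = suminf (gt mu (x*t))" for t
  define c where "c = (mu - 1) / 2"
  have Feq: "F t = x powr c * t powr (mu - 1) * exp (- t - x) * S t" if t: "t > 0" for t
  proof -
    have w: "x * t > 0" using x t by simp
    have "besselI (mu - 1) (2 * sqrt (x * t)) = sqrt (x*t) powr (mu - 1) * S t"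
      unfolding S_def by (rule bessel_eq[OF w mu])
    also have "sqrt (x*t) powr (mu - 1) = x powr c * t powr c"
    proof -
      have "sqrt (x*t) = (x*t) powr (1/2)" using w by (simp add: powr_half_sqrt)
      hence "sqrt (x*t) powr (mu - 1) = (x*t) powr c" by (simp add: powr_powr c_def)
      also have "\<dots> = x powr c * t powr c" using x t by (simp add: powr_mult)
      finally show ?thesis .
    qed
    finally have b: "besselI (mu - 1) (2 * sqrt (x * t)) = x powr c * t powr c * S t" .
    have tt: "t powr c * t powr c = t powr (mu - 1)" by (simp add: powr_add[symmetric] c_def)
    show ?thesis unfolding F_def b c_def[symmetric] tt[symmetric] by (simp add: ac_simps)
  qed
  have Spos: "S t > 0" if t: "t \<ge> y" for t
  proof -
    have "x * t \<ge> x * y" using t x by (simp add: mult_left_mono)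
    hence h2: "x * t + mu > 0" using xy by linarith
    have h1: "x * t > 0" using x y t by simp
    show ?thesis unfolding S_def by (rule gt_suminf_pos[OF mu h1 h2])
  qed
  have Fpos: "F t > 0" if t: "t \<ge> y" for t
    using Feq[of t] Spos[OF t] t y x by simp
  obtain C where C: "\<And>t. t \<ge> y \<Longrightarrow> t powr (mu + 1) \<le> C * exp (t/4)"
    using powr_le_exp[OF y, of "mu + 1"] by blast
  define M where "M = Mc mu"
  define B where "B = x powr c * (2 * M + 1) * exp (1 + x)"
  define D where "D = (1/y + x)^2 * C"
  have M1: "M \<ge> 1" by (simp add: M_def Mc_def)
  have Fb: "\<bar>F t\<bar> \<le> (B * D) * exp (- (1/4) * t)" if t: "t \<ge> y" for t
  proof -
    have t0: "t > 0" using t y by simp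
    have w0: "x * t \<ge> 0" using x t0 by simp
    have Sb: "\<bar>S t\<bar> \<le> (2 * M + 1) * (1 + x*t)^2 * exp (sqrt (x*t)) * exp (1 + sqrt (x*t))"
      unfolding S_def M_def by (rule gt_suminf_bound[OF mu w0])
    have nn: "0 \<le> x powr c * t powr (mu - 1) * exp (- t - x)" by simp
    have "\<bar>F t\<bar> = x powr c * t powr (mu - 1) * exp (- t - x) * \<bar>S t\<bar>"
      using Feq[OF t0] by (simp add: abs_mult)
    also have "\<dots> \<le> x powr c * t powr (mu - 1) * exp (- t - x) *
        ((2 * M + 1) * (1 + x*t)^2 * exp (sqrt (x*t)) * exp (1 + sqrt (x*t)))"
      by (rule mult_left_mono[OF Sb nn])
    also have "\<dots> = (x powr c * (2 * M + 1)) * (t powr (mu - 1) * (1 + x*t)^2) *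
        (exp (- t - x) * exp (sqrt (x*t)) * exp (1 + sqrt (x*t)))"
      by (simp only: ac_simps)
    also have "\<dots> \<le> (x powr c * (2 * M + 1)) * (t powr (mu - 1) * (1 + x*t)^2) *
        (exp (1 + x) * exp (- t / 2))"
      using M1 x t0 by (intro mult_left_mono exp_ineq) auto
    also have "t powr (mu - 1) * (1 + x*t)^2 \<le> D * exp (t/4)"
    proof -
      have "1 + x*t \<le> (1/y + x) * t" using t y x by (simp add: field_simps)
      hence "(1 + x*t)^2 \<le> ((1/y + x) * t)^2" using x t0 by (intro power_mono) auto
      hence "t powr (mu - 1) * (1 + x*t)^2 \<le> t powr (mu - 1) * ((1/y + x) * t)^2"
        by (intro mult_left_mono) auto
      also have "\<dots> = (1/y + x)^2 * (t powr (mu - 1) * t powr 2)"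
        using t0 by (simp add: power_mult_distrib powr_realpow ac_simps)
      also have "t powr (mu - 1) * t powr 2 = t powr (mu + 1)" by (simp add: powr_add[symmetric] add.commute)
      also have "(1/y + x)^2 * t powr (mu + 1) \<le> (1/y + x)^2 * (C * exp (t/4))"
        using C[OF t] by (intro mult_left_mono) auto
      finally show ?thesis by (simp add: D_def ac_simps)
    qed
    hence "(x powr c * (2 * M + 1)) * (t powr (mu - 1) * (1 + x*t)^2) * (exp (1 + x) * exp (- t / 2))
        \<le> (x powr c * (2 * M + 1)) * (D * exp (t/4)) * (exp (1 + x) * exp (- t / 2))"
      using M1 by (intro mult_right_mono mult_left_mono) auto
    also have "\<dots> = (B * D) * (exp (t/4) * exp (- t / 2))" by (simp add: B_def ac_simps)
    also have "exp (t/4) * exp (- t / 2) = exp (- (1/4) * t)" by (simp add: exp_add[symmetric])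
    finally show ?thesis .
  qed
  have meas[measurable]: "F \<in> borel_measurable lborel" unfolding F_def besselI_def by measurable
  have int_exp: "set_integrable lborel {y..} (\<lambda>t. exp (- (1/4) * t))"
  proof -
    have "(\<lambda>t. exp (-(1/4)*t)) integrable_on {y..}" by (rule integrable_on_exp_minus_to_infinity) simp
    hence "(\<lambda>t. exp (-(1/4)*t)) absolutely_integrable_on {y..}"
      by (rule nonnegative_absolutely_integrable_1) simp
    hence "integrable lebesgue (\<lambda>t. indicator {y..} t *\<^sub>R exp(-(1/4)*t))"
      by (simp add: set_integrable_def)
    moreover have "(\<lambda>t. indicator {y..} t *\<^sub>R exp(-(1/4)*t)) \<in> borel_measurable lborel"
      by measurable
    ultimately show ?thesis unfolding set_integrable_def using integrable_completion by blast
  qed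
  have intF: "set_integrable lborel {y..} F"
  proof (rule set_integrable_bound[OF set_integrable_mult_right[OF int_exp, of "B*D"]])
    show "set_borel_measurable lborel {y..} F" unfolding set_borel_measurable_def by measurable
    show "AE t in lborel. t \<in> {y..} \<longrightarrow> norm (F t) \<le> norm (B * D * exp (- (1/4) * t))"
    proof (rule AE_I2, intro impI)
      fix t :: real assume "t \<in> {y..}"
      hence "\<bar>F t\<bar> \<le> (B * D) * exp (- (1/4) * t)" using Fb by auto
      also have "\<dots> \<le> \<bar>B * D * exp (- (1/4) * t)\<bar>" by simp
      finally show "norm (F t) \<le> norm (B * D * exp (- (1/4) * t))" by simp
    qed
  qed
  define h where "h t = indicator {y..} t * F t" for t
  have hint: "integrable lborel h" using intF unfolding set_integrable_def h_def by simp
  have hnn: "0 \<le> h t" for t using Fpos[of t] by (auto simp: h_def indicator_def less_imp_le)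
  have i0: "integral\<^sup>L lborel h \<ge> 0" using hnn by simp
  have i1: "integral\<^sup>L lborel h \<noteq> 0"
  proof
    assume "integral\<^sup>L lborel h = 0"
    hence ae: "AE t in lborel. h t = 0" using integral_nonneg_eq_0_iff_AE[OF hint] hnn by simp
    have "{t \<in> space lborel. \<not> h t = 0} = {y..}"
      using Fpos by (auto simp: h_def indicator_def) (smt (verit))
    hence "emeasure lborel {y..} = 0" using ae AE_iff_measurable[of "{y..}" lborel "\<lambda>t. h t = 0"] by simp
    moreover have "emeasure lborel {y..y+1} \<le> emeasure lborel {y..}"
      by (intro emeasure_mono) auto
    ultimately show False by simp
  qed
  have eq: "marcumQ mu x y = x powr ((1 - mu) / 2) * integral\<^sup>L lborel h"
    unfolding marcumQ_def set_lebesgue_integral_def h_def F_def by simp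
  show ?thesis unfolding eq using i0 i1 x by simp
qed

theorem corollary1:
  fixes x y mu0 :: real
  assumes "y > 0" and "-1 < mu0" and "mu0 < 0"
    and "x > 0" and "x \<ge> L_bound mu0 y"
  shows "\<forall>mu::real. mu \<ge> mu0 \<longrightarrow> marcumQ mu x y > 0"
proof (intro allI impI)
  fix mu :: real assume mu: "mu \<ge> mu0"
  have y: "y > 0" and m1: "-1 < mu0" and m0: "mu0 < 0" using assms by auto
  have "(y - mu0 - 2)^2 + 4 * y = (y - mu0)^2 + 4 * (mu0 + 1)"
    by (simp add: power2_eq_square algebra_simps)
  hence "(y - mu0)^2 < (y - mu0 - 2)^2 + 4 * y" using m1 by simp
  hence "sqrt ((y - mu0)^2) < sqrt ((y - mu0 - 2)^2 + 4 * y)" by (rule real_sqrt_less_mono)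
  hence sq: "y - mu0 < sqrt ((y - mu0 - 2)^2 + 4 * y)" using y m0 by simp
  have "L_bound mu0 y * (2 * y) = sqrt ((y - mu0 - 2)^2 + 4 * y) - y - mu0"
    using y by (simp add: L_bound_def)
  hence "L_bound mu0 y * (2 * y) > - 2 * mu0" using sq by simp
  moreover have "x * (2 * y) \<ge> L_bound mu0 y * (2 * y)" using assms(5) y by (intro mult_right_mono) auto
  ultimately have "x * (2 * y) > - 2 * mu0" by linarith
  hence "x * y > - mu0" by simp
  hence "x * y + mu > 0" using mu by simp
  thus "marcumQ mu x y > 0" using Q_pos[of x y mu] assms mu by simp
qed

end
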